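(* Let $F$, $G$, $\Pi$ be as in the context. For every $(\omega,x)\in\Sigma_A\times I$ for which the forward Lyapunov exponent $\chi_+^G(\omega,x)$ with respect to $G$ exists, the forward Lyapunov exponent $\chi_+(\Pi(\omega,x))$ with respect to $F$ exists and $\chi_+^G(\omega,x)=\chi_+(\Pi(\omega,x))$.
   Context: $I=[0,1]$, $R(x)=1-x$. $F(\xi,p)=(\sigma(\xi),f_{\xi_0}(p))$ on $\Sigma_N\times I$, $\Sigma_N=\{1,\ldots,N\}^{\mathbb Z}$, with $f_i$ $C^1$-diffeomorphisms onto their images. $\mathcal I_P$ / $\mathcal I_R$: indices of orientation preserving / reversing $f_i$. $A=(a_{ij})_{i,j=1}^{2N}$ with $a_{ij}=1$ if ($i\in\mathcal I_P$, $j\le N$), or ($i\in\mathcal I_R$, $j>N$), or ($i-N\in\mathcal I_P$, $j>N$), or ($i-N\in\mathcal I_R$, $j\le N$), else $0$; $\Sigma_A$ the $A$-admissible sequences in $\{1,\ldots,2N\}^{\mathbb Z}$ with shift $\sigma_A$; $\pi(\omega)_n=\overline{\omega_n}$ ($\overline i=i$ for $i\le N$, $\overline i=i-N$ otherwise). $G(\omega,x)=(\sigma_A(\omega),g_{\omega_0}(x))$ with $g_i=f_i$, $g_{i+N}=R\circ f_i\circ R$ ($i\in\mathcal I_P$), $g_i=R\circ f_i$, $g_{i+N}=f_i\circ R$ ($i\in\mathcal I_R$). $C=\{\omega\colon\omega_0\le N\}$; $\Pi(\omega,x)=(\pi(\omega),x)$ if $\omega\in C$, $(\pi(\omega),R(x))$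 otherwise. Forward Lyapunov exponents: $\chi_+(\xi,p)=\lim_n\frac1n\log|(f_{\xi_{n-1}}\circ\cdots\circ f_{\xi_0})'(p)|$ and $\chi_+^G(\omega,x)=\lim_n\frac1n\log|(g_{\omega_{n-1}}\circ\cdots\circ g_{\omega_0})'(x)|$, when the limits exist. *)

theory Defs
  imports "HOL-Analysis.Analysis"
begin

definition Ival :: "real set" where "Ival = {0..1}"

definition Rf :: "real \<Rightarrow> real" where "Rf x = 1 - x"

definition C1_diffeo_into :: "(real \<Rightarrow> real) \<Rightarrow> bool" where
  "C1_diffeo_into h \<longleftrightarrow> h ` Ival \<subseteq> Ival \<and> inj_on h Ival \<and>
     (\<exists>h'. (\<forall>x\<in>Ival. (h has_real_derivative h' x) (at x within Ival) \<and> h' x \<noteq> 0)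
           \<and> continuous_on Ival h')"

definition IP :: "nat \<Rightarrow> (nat \<Rightarrow> real \<Rightarrow> real) \<Rightarrow> nat set" where
  "IP N f = {i \<in> {1..N}. strict_mono_on Ival (f i)}"

definition IR :: "nat \<Rightarrow> (nat \<Rightarrow> real \<Rightarrow> real) \<Rightarrow> nat set" where
  "IR N f = {i \<in> {1..N}. monotone_on Ival (<) (>) (f i)}"

definition matA :: "nat \<Rightarrow> (nat \<Rightarrow> real \<Rightarrow> real) \<Rightarrow> nat \<Rightarrow> nat \<Rightarrow> nat" where
  "matA N f i j =
     (if (i \<in> IP N f \<and> j \<le> N) \<or> (i \<in> IR N f \<and> j > N)
         \<or> (i > N \<and> i - N \<in> IP N f \<and> j > N) \<or> (i > N \<and> i - N \<in> IR N f \<and> j \<le> N)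
      then 1 else 0)"

definition SigmaA :: "nat \<Rightarrow> (nat \<Rightarrow> real \<Rightarrow> real) \<Rightarrow> (int \<Rightarrow> nat) set" where
  "SigmaA N f = {\<omega>. (\<forall>n. \<omega> n \<in> {1..2*N}) \<and> (\<forall>n. matA N f (\<omega> n) (\<omega> (n+1)) = 1)}"

definition bar :: "nat \<Rightarrow> nat \<Rightarrow> nat" where
  "bar N i = (if i \<le> N then i else i - N)"

definition piA :: "nat \<Rightarrow> (int \<Rightarrow> nat) \<Rightarrow> (int \<Rightarrow> nat)" where
  "piA N \<omega> = (\<lambda>n. bar N (\<omega> n))"

definition gfun :: "nat \<Rightarrow> (nat \<Rightarrow> real \<Rightarrow> real) \<Rightarrow> nat \<Rightarrow> real \<Rightarrow> real" where
  "gfun N f i =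
     (if i \<le> N then (if i \<in> IP N f then f i else Rf \<circ> f i)
      else (if i - N \<in> IP N f then Rf \<circ> f (i - N) \<circ> Rf else f (i - N) \<circ> Rf))"

definition PiMap :: "nat \<Rightarrow> (int \<Rightarrow> nat) \<Rightarrow> real \<Rightarrow> (int \<Rightarrow> nat) \<times> real" where
  "PiMap N \<omega> x = (piA N \<omega>, if \<omega> 0 \<le> N then x else Rf x)"

fun itcomp :: "(nat \<Rightarrow> real \<Rightarrow> real) \<Rightarrow> (int \<Rightarrow> nat) \<Rightarrow> nat \<Rightarrow> real \<Rightarrow> real" where
  "itcomp h s 0 = id"
| "itcomp h s (Suc n) = h (s (int n)) \<circ> itcomp h s n"

definition fwd_lyap_has :: "(nat \<Rightarrow> real \<Rightarrow> real) \<Rightarrow> (int \<Rightarrow> nat) \<Rightarrow> real \<Rightarrow> real \<Rightarrow> bool" where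
  "fwd_lyap_has h s p L \<longleftrightarrow>
     (\<exists>D. (\<forall>n. (itcomp h s n has_real_derivative D n) (at p within Ival))
          \<and> (\<lambda>n. ln \<bar>D n\<bar> / real n) \<longlonglongrightarrow> L)"

end

theory Submission
  imports Defs
begin

definition Rp :: "bool \<Rightarrow> real \<Rightarrow> real" where
  "Rp b = (if b then Rf else id)"

lemma Rp_inv: "Rp b \<circ> Rp b = id"
  by (auto simp: Rp_def Rf_def fun_eq_iff)

lemma Rp_img: "Rp b ` Ival = Ival"
proof (cases b)
  case True
  have "Rf ` Ival = Ival"
    unfolding Ival_def Rf_def
    by (auto intro!: image_eqI[where x="1 - _"])
  then show ?thesis using True by (simp add: Rp_def)
qed (simp add: Rp_def)

lemma Rp_deriv: "(Rp b has_real_derivative (if b then -1 else 1)) (at y within S)"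
  unfolding Rp_def Rf_def
  by (cases b) (auto intro!: derivative_eq_intros simp: id_def)

lemma IP_IR_disj: "i \<in> IP N f \<Longrightarrow> i \<in> IR N f \<Longrightarrow> False"
proof -
  assume a: "i \<in> IP N f" "i \<in> IR N f"
  have "f i 0 < f i 1" using a(1) unfolding IP_def Ival_def
    by (auto simp: strict_mono_on_def)
  moreover have "f i 0 > f i 1" using a(2) unfolding IR_def Ival_def
    by (auto simp: monotone_on_def)
  ultimately show False by simp
qed

lemma step:
  assumes "\<omega> \<in> SigmaA N f"
  shows "f (bar N (\<omega> n)) = Rp (N < \<omega> (n+1)) \<circ> gfun N f (\<omega> n) \<circ> Rp (N < \<omega> n)"
proof -
  have m: "matA N f (\<omega> n) (\<omega> (n+1)) = 1" using assms by (auto simp: SigmaA_def)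
  have RR: "Rf \<circ> Rf = id" by (auto simp: Rf_def fun_eq_iff)
  show ?thesis
  proof (cases "\<omega> n \<le> N")
    case True
    then show ?thesis
    proof (cases "\<omega> n \<in> IP N f")
      case True
      then have "\<omega> (n+1) \<le> N" using m \<open>\<omega> n \<le> N\<close>
        by (auto simp: matA_def split: if_splits dest: IP_IR_disj)
      then show ?thesis using True \<open>\<omega> n \<le> N\<close> by (simp add: Rp_def gfun_def bar_def)
    next
      case False
      then have "\<omega> (n+1) > N" using m \<open>\<omega> n \<le> N\<close>
        by (auto simp: matA_def split: if_splits)
      then show ?thesis using False \<open>\<omega> n \<le> N\<close>
        by (simp add: Rp_def gfun_def bar_def comp_assoc[symmetric] RR)
    qed
  next
    case c: False
    then show ?thesis
    proof (cases "\<omega> n - N \<in> IP N f")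
      case True
      have "\<omega> n \<notin> IP N f" "\<omega> n \<notin> IR N f" using c by (auto simp: IP_def IR_def)
      then have "\<omega> (n+1) > N" using m c True
        by (auto simp: matA_def split: if_splits dest: IP_IR_disj)
      then show ?thesis using True c
        by (simp add: Rp_def gfun_def bar_def comp_assoc RR)
           (simp add: comp_assoc[symmetric] RR)
    next
      case False
      have "\<omega> n \<notin> IP N f" "\<omega> n \<notin> IR N f" using c by (auto simp: IP_def IR_def)
      then have "\<omega> (n+1) \<le> N" using m c False
        by (auto simp: matA_def split: if_splits)
      then show ?thesis using False c
        by (simp add: Rp_def gfun_def bar_def comp_assoc RR)
    qed
  qed
qed

lemma conj_it:
  assumes "\<omega> \<in> SigmaA N f"
  shows "itcomp f (piA N \<omega>) n = Rp (N < \<omega> (int n)) \<circ> itcomp (gfun N f) \<omega> n \<circ> Rp (N < \<omega> 0)"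
proof (induction n)
  case 0
  then show ?case by (simp add: Rp_inv)
next
  case (Suc n)
  have "itcomp f (piA N \<omega>) (Suc n) = f (bar N (\<omega> (int n))) \<circ> itcomp f (piA N \<omega>) n"
    by (simp add: piA_def)
  also have "\<dots> = Rp (N < \<omega> (int n + 1)) \<circ> gfun N f (\<omega> (int n)) \<circ>
      (Rp (N < \<omega> (int n)) \<circ> Rp (N < \<omega> (int n))) \<circ> itcomp (gfun N f) \<omega> n \<circ> Rp (N < \<omega> 0)"
    unfolding step[OF assms] Suc by (simp add: comp_assoc)
  also have "\<dots> = Rp (N < \<omega> (int (Suc n))) \<circ> itcomp (gfun N f) \<omega> (Suc n) \<circ> Rp (N < \<omega> 0)"
    by (simp add: Rp_inv comp_assoc add.commute)
  finally show ?case .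
qed

theorem lemma3p18:
  fixes N :: nat and f :: "nat \<Rightarrow> real \<Rightarrow> real"
    and \<omega> :: "int \<Rightarrow> nat" and x L :: real
  assumes "N \<ge> 1"
    and "\<And>i. i \<in> {1..N} \<Longrightarrow> C1_diffeo_into (f i)"
    and "\<omega> \<in> SigmaA N f" and "x \<in> Ival"
    and "fwd_lyap_has (gfun N f) \<omega> x L"
  shows "fwd_lyap_has f (fst (PiMap N \<omega> x)) (snd (PiMap N \<omega> x)) L"
proof -
  obtain D where D: "\<And>n. (itcomp (gfun N f) \<omega> n has_real_derivative D n) (at x within Ival)"
    and lim: "(\<lambda>n. ln \<bar>D n\<bar> / real n) \<longlonglongrightarrow> L"
    using assms(5) unfolding fwd_lyap_has_def by blast
  define b0 where "b0 = (N < \<omega> 0)"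
  define p where "p = Rp b0 x"
  have px: "Rp b0 p = x" unfolding p_def using Rp_inv[of b0] by (metis comp_apply id_apply)
  have snd: "snd (PiMap N \<omega> x) = p" by (simp add: PiMap_def p_def Rp_def b0_def)
  have fst: "fst (PiMap N \<omega> x) = piA N \<omega>" by (simp add: PiMap_def)
  define D' where "D' n = (if N < \<omega> (int n) then -1 else 1) * (D n * (if b0 then -1 else 1))" for n
  have dv: "(itcomp f (piA N \<omega>) n has_real_derivative D' n) (at p within Ival)" for n
  proof -
    have d1: "(itcomp (gfun N f) \<omega> n \<circ> Rp b0 has_real_derivative D n * (if b0 then -1 else 1)) (at p within Ival)"
      apply (rule DERIV_image_chain)
      using D[of n] by (simp_all add: px Rp_img Rp_deriv)
    have "(Rp (N < \<omega> (int n)) \<circ> (itcomp (gfun N f) \<omega> n \<circ> Rp b0) has_real_derivative D' n) (at p within Ival)"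
      unfolding D'_def
      apply (rule DERIV_image_chain[OF _ d1])
      by (rule Rp_deriv)
    then show ?thesis using conj_it[OF assms(3), of n] by (simp add: comp_assoc b0_def)
  qed
  have "\<bar>D' n\<bar> = \<bar>D n\<bar>" for n by (simp add: D'_def abs_mult)
  then have "(\<lambda>n. ln \<bar>D' n\<bar> / real n) \<longlonglongrightarrow> L" using lim by simp
  then show ?thesis unfolding fwd_lyap_has_def fst snd using dv by blast
qed

end
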